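(* Let $G$ be a graph and let $U$ be the set of vertices $u\in V(G)$ such that the connected component of $G$ containing $u$ is a complete graph. Then $\mu_\alpha(G)=\mu_\alpha(G-U)$.
   Context: All graphs are finite and simple; the null graph is allowed. For a graph $H$, $\alpha(H)$ is the maximum size of an independent set, $i(H)$ the minimum size of an inclusion-maximal independent set (both $0$ for the null graph), and $\mu_\alpha(H)=\alpha(H)-i(H)$. *)

theory Defs
  imports Main
begin

text \<open>A finite simple graph is given by a finite vertex set V and an edge
relation E, assumed symmetric and irreflexive; only edges between vertices of V
are relevant. Induced subgraphs (vertex deletion) are obtained by shrinking V.\<close>

definition simple_graph :: "'a set \<Rightarrow> ('a \<Rightarrow> 'a \<Rightarrow> bool) \<Rightarrow> bool" where
  "simple_graph V E \<longleftrightarrow> finite V \<and> (\<forall>x y. E x y \<longrightarrow> E y x) \<and> (\<forall>x. \<not> E x x)"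

definition indep_set :: "'a set \<Rightarrow> ('a \<Rightarrow> 'a \<Rightarrow> bool) \<Rightarrow> 'a set \<Rightarrow> bool" where
  "indep_set V E S \<longleftrightarrow> S \<subseteq> V \<and> (\<forall>x\<in>S. \<forall>y\<in>S. \<not> E x y)"

definition maximal_indep_set :: "'a set \<Rightarrow> ('a \<Rightarrow> 'a \<Rightarrow> bool) \<Rightarrow> 'a set \<Rightarrow> bool" where
  "maximal_indep_set V E S \<longleftrightarrow> indep_set V E S \<and>
     (\<forall>T. indep_set V E T \<and> S \<subseteq> T \<longrightarrow> T = S)"

definition indep_number :: "'a set \<Rightarrow> ('a \<Rightarrow> 'a \<Rightarrow> bool) \<Rightarrow> nat" where
  "indep_number V E = Max (card ` {S. indep_set V E S})"

definition indep_domination_number :: "'a set \<Rightarrow> ('a \<Rightarrow> 'a \<Rightarrow> bool) \<Rightarrow> nat" where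
  "indep_domination_number V E = Min (card ` {S. maximal_indep_set V E S})"

definition mu_alpha :: "'a set \<Rightarrow> ('a \<Rightarrow> 'a \<Rightarrow> bool) \<Rightarrow> int" where
  "mu_alpha V E = int (indep_number V E) - int (indep_domination_number V E)"

definition component :: "'a set \<Rightarrow> ('a \<Rightarrow> 'a \<Rightarrow> bool) \<Rightarrow> 'a \<Rightarrow> 'a set" where
  "component V E u = {v. (\<lambda>x y. x \<in> V \<and> y \<in> V \<and> E x y)\<^sup>*\<^sup>* u v \<and> u \<in> V \<and> v \<in> V}"

definition complete_on :: "('a \<Rightarrow> 'a \<Rightarrow> bool) \<Rightarrow> 'a set \<Rightarrow> bool" where
  "complete_on E C \<longleftrightarrow> (\<forall>x\<in>C. \<forall>y\<in>C. x \<noteq> y \<longrightarrow> E x y)"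

end

theory Submission
  imports Defs
begin

lemma comp_refl: "u \<in> V \<Longrightarrow> u \<in> component V E u"
  unfolding component_def by auto

lemma comp_sub: "component V E u \<subseteq> V"
  unfolding component_def by auto

lemma comp_edge: "u \<in> V \<Longrightarrow> v \<in> V \<Longrightarrow> E u v \<Longrightarrow> v \<in> component V E u"
  unfolding component_def by auto

lemma rtr_sym:
  assumes sym: "\<And>x y. R x y \<Longrightarrow> R y x" and "R\<^sup>*\<^sup>* a b"
  shows "R\<^sup>*\<^sup>* b a"
  using assms(2)
proof induction
  case base then show ?case by simp
next
  case (step y z)
  have "R z y" using sym step.hyps(2) .
  then show ?case using converse_rtranclp_into_rtranclp step.IH by metis
qed

lemma comp_same:
  assumes sg: "simple_graph V E" and v: "v \<in> component V E u"
  shows "component V E v = component V E u"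
proof -
  let ?R = "\<lambda>x y. x \<in> V \<and> y \<in> V \<and> E x y"
  have sym: "\<And>x y. ?R x y \<Longrightarrow> ?R y x" using sg unfolding simple_graph_def by blast
  from v have uv: "?R\<^sup>*\<^sup>* u v" "u \<in> V" "v \<in> V" unfolding component_def by auto
  have vu: "?R\<^sup>*\<^sup>* v u" using rtr_sym[of ?R, OF sym uv(1)] by blast
  show ?thesis unfolding component_def using uv vu
    by (auto intro: rtranclp_trans)
qed

lemma exists_maximal:
  assumes "finite V"
  shows "\<exists>S. maximal_indep_set V E S"
proof -
  have fin: "finite {S. indep_set V E S}" using assms
    by (rule finite_subset[rotated, OF finite_Pow_iff[THEN iffD2]]) (auto simp: indep_set_def)
  have ne: "{} \<in> {S. indep_set V E S}" by (simp add: indep_set_def)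
  have "Max (card ` {S. indep_set V E S}) \<in> card ` {S. indep_set V E S}"
    using fin ne by (intro Max_in) auto
  then obtain S where S: "indep_set V E S" "card S = Max (card ` {S. indep_set V E S})"
    by auto
  have "maximal_indep_set V E S"
    unfolding maximal_indep_set_def
  proof (intro conjI allI impI S(1))
    fix T assume T: "indep_set V E T \<and> S \<subseteq> T"
    have "card T \<le> card S" using S(2) T fin by simp
    moreover have "finite T" using T assms by (auto simp: indep_set_def intro: finite_subset)
    ultimately show "T = S" using T card_seteq by blast
  qed
  then show ?thesis by blast
qed

lemma fin_indep: "finite V \<Longrightarrow> finite {S. indep_set V E S}"
  by (rule finite_subset[rotated, OF finite_Pow_iff[THEN iffD2]]) (auto simp: indep_set_def)

theorem corollary3:
  fixes V :: "'a set" and E :: "'a \<Rightarrow> 'a \<Rightarrow> bool"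
  assumes "simple_graph V E"
  defines "U \<equiv> {u \<in> V. complete_on E (component V E u)}"
  shows "mu_alpha V E = mu_alpha (V - U) E"
proof -
  note sg = assms(1)
  have finV: "finite V" and sym: "\<And>x y. E x y \<Longrightarrow> E y x" and irr: "\<And>x. \<not> E x x"
    using sg unfolding simple_graph_def by auto
  define W where "W = V - U"
  have UV: "U \<subseteq> V" unfolding U_def by auto
  have finU: "finite U" using UV finV finite_subset by blast
  have finW: "finite W" using finV W_def by simp
  have noedge: "\<And>u w. u \<in> U \<Longrightarrow> w \<in> V \<Longrightarrow> E u w \<Longrightarrow> w \<in> U"
  proof -
    fix u w assume u: "u \<in> U" and w: "w \<in> V" and e: "E u w"
    have "w \<in> component V E u" using comp_edge[of u V w E] w e u UV by auto
    then have "component V E w = component V E u" by (rule comp_same[OF sg])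
    then show "w \<in> U" using u w unfolding U_def by auto
  qed
  have compU: "\<And>u x. u \<in> U \<Longrightarrow> x \<in> component V E u \<Longrightarrow> x \<in> U \<and> component V E x = component V E u"
  proof -
    fix u x assume u: "u \<in> U" and x: "x \<in> component V E u"
    have c: "component V E x = component V E u" using comp_same[OF sg x] .
    moreover have xV: "x \<in> V" using x comp_sub[of V E u] by blast
    moreover have "complete_on E (component V E u)" using u unfolding U_def by simp
    ultimately show "x \<in> U \<and> component V E x = component V E u" unfolding U_def by simp
  qed
  define C where "C = component V E ` U"
  define k where "k = card C"
  have finC: "finite C" using finU C_def by simp
  define pick :: "'a set \<Rightarrow> 'a" where "pick = (\<lambda>c. SOME x. x \<in> c)"
  have pick: "\<And>c. c \<in> C \<Longrightarrow> pick c \<in> U \<and> component V E (pick c) = c"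
  proof -
    fix c assume "c \<in> C"
    then obtain u where u: "u \<in> U" "c = component V E u" unfolding C_def by auto
    have "u \<in> c" using u comp_refl[of u V E] UV by auto
    then have "pick c \<in> c" unfolding pick_def by (rule someI)
    then show "pick c \<in> U \<and> component V E (pick c) = c" using compU[OF u(1)] u(2) by auto
  qed
  define R where "R = pick ` C"
  have RU: "R \<subseteq> U" using pick R_def by auto
  have injp: "inj_on pick C" by (rule inj_onI) (metis pick)
  have cardR: "card R = k" unfolding R_def k_def using card_image[OF injp] .
  have finR: "finite R" using R_def finC by simp
  have Rind: "\<And>x y. x \<in> R \<Longrightarrow> y \<in> R \<Longrightarrow> \<not> E x y"
  proof
    fix x y assume x: "x \<in> R" and y: "y \<in> R" and e: "E x y"
    obtain c d where c: "c \<in> C" "x = pick c" and d: "d \<in> C" "y = pick d" using x y R_def by auto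
    have "y \<in> component V E x" using comp_edge[of x V y E] e x y RU UV by auto
    then have "component V E y = component V E x" by (rule comp_same[OF sg])
    then have "c = d" using pick c d by metis
    then show False using c d e irr by simp
  qed
  have A: "\<And>S. indep_set V E S \<Longrightarrow> card (S \<inter> U) \<le> k"
  proof -
    fix S assume S: "indep_set V E S"
    have "inj_on (component V E) (S \<inter> U)"
    proof (rule inj_onI, rule ccontr)
      fix x y assume x: "x \<in> S \<inter> U" and y: "y \<in> S \<inter> U" and eq: "component V E x = component V E y"
        and ne: "x \<noteq> y"
      have "y \<in> component V E x" using eq comp_refl[of y V E] y UV by auto
      moreover have "x \<in> component V E x" using comp_refl[of x V E] x UV by auto
      moreover have "complete_on E (component V E x)" using x U_def by auto
      ultimately have "E x y" using ne unfolding complete_on_def by blast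
      then show False using S x y unfolding indep_set_def by blast
    qed
    moreover have "component V E ` (S \<inter> U) \<subseteq> C" unfolding C_def by auto
    ultimately show "card (S \<inter> U) \<le> k" unfolding k_def using card_inj_on_le finC by blast
  qed
  have split: "\<And>S. S \<subseteq> V \<Longrightarrow> card S = card (S \<inter> W) + card (S \<inter> U)"
  proof -
    fix S assume "S \<subseteq> V"
    then have "S = (S \<inter> W) \<union> (S \<inter> U)" "finite S" using W_def finV finite_subset by auto
    moreover have "(S \<inter> W) \<inter> (S \<inter> U) = {}" using W_def by auto
    ultimately show "card S = card (S \<inter> W) + card (S \<inter> U)"
      using card_Un_disjoint[of "S \<inter> W" "S \<inter> U"] by simp
  qed
  have Cl: "\<And>S. indep_set W E S \<Longrightarrow> indep_set V E (S \<union> R) \<and> card (S \<union> R) = card S + k"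
  proof -
    fix S assume S: "indep_set W E S"
    have SW: "S \<subseteq> W" using S by (auto simp: indep_set_def)
    have ind: "indep_set V E (S \<union> R)"
      unfolding indep_set_def
    proof (intro conjI ballI)
      show "S \<union> R \<subseteq> V" using SW RU UV W_def by auto
    next
      fix x y assume x: "x \<in> S \<union> R" and y: "y \<in> S \<union> R"
      show "\<not> E x y"
      proof
        assume e: "E x y"
        show False
        proof (cases "x \<in> S")
          case True
          show False
          proof (cases "y \<in> S")
            case True then show False using S \<open>x \<in> S\<close> e by (auto simp: indep_set_def)
          next
            case False
            then have "y \<in> U" using y RU by auto
            then have "x \<in> U" using noedge[of y x] sym[OF e] True SW W_def \<open>y \<in> U\<close> by auto
            then show False using True SW W_def by auto
          qed
        next
          case False
          then have xU: "x \<in> R" using x by auto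
          show False
          proof (cases "y \<in> S")
            case True
            then have "y \<in> U" using noedge[of x y] e xU RU SW True W_def by auto
            then show False using True SW W_def by auto
          next
            case False then show False using Rind xU y e by auto
          qed
        qed
      qed
    qed
    have "finite S" using SW finW finite_subset by blast
    moreover have "S \<inter> R = {}" using SW RU W_def by auto
    ultimately have "card (S \<union> R) = card S + k" using card_Un_disjoint[of S R] finR cardR by simp
    then show "indep_set V E (S \<union> R) \<and> card (S \<union> R) = card S + k" using ind by blast
  qed
  have D: "\<And>S. maximal_indep_set V E S \<Longrightarrow> maximal_indep_set W E (S \<inter> W) \<and> card (S \<inter> U) = k"
  proof -
    fix S assume S: "maximal_indep_set V E S"
    have Si: "indep_set V E S" using S by (auto simp: maximal_indep_set_def)
    have SV: "S \<subseteq> V" using Si by (auto simp: indep_set_def)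
    have "component V E ` (S \<inter> U) = C"
    proof
      show "component V E ` (S \<inter> U) \<subseteq> C" unfolding C_def by auto
    next
      show "C \<subseteq> component V E ` (S \<inter> U)"
      proof
        fix c assume "c \<in> C"
        then obtain u where u: "u \<in> U" "c = component V E u" unfolding C_def by auto
        show "c \<in> component V E ` (S \<inter> U)"
        proof (cases "S \<inter> c = {}")
          case False
          then obtain s where s: "s \<in> S" "s \<in> c" by auto
          then have "s \<in> U \<and> component V E s = c" using compU[OF u(1)] u(2) by auto
          then show ?thesis using s by blast
        next
          case True
          have "indep_set V E (insert u S)"
            unfolding indep_set_def
          proof (intro conjI ballI)
            show "insert u S \<subseteq> V" using u UV SV by auto
          next
            fix x y assume x: "x \<in> insert u S" and y: "y \<in> insert u S"
            have nb: "\<And>s. s \<in> S \<Longrightarrow> \<not> E u s"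
            proof
              fix s assume s: "s \<in> S" and e: "E u s"
              have "s \<in> c" using comp_edge[of u V s E] e u UV SV s by auto
              then show False using True s by auto
            qed
            show "\<not> E x y"
            proof
              assume e: "E x y"
              have "x = u \<or> x \<in> S" "y = u \<or> y \<in> S" using x y by auto
              then show False using e nb[of y] nb[of x] sym[of x y] irr[of u] Si unfolding indep_set_def by blast
            qed
          qed
          then have "insert u S = S" using S unfolding maximal_indep_set_def by blast
          moreover have "u \<in> c" using u comp_refl[of u V E] UV by auto
          ultimately show ?thesis using True by auto
        qed
      qed
    qed
    moreover have "inj_on (component V E) (S \<inter> U)"
    proof (rule inj_onI, rule ccontr)
      fix x y assume x: "x \<in> S \<inter> U" and y: "y \<in> S \<inter> U" and eq: "component V E x = component V E y"
        and ne: "x \<noteq> y"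
      have "y \<in> component V E x" using eq comp_refl[of y V E] y UV by auto
      moreover have "x \<in> component V E x" using comp_refl[of x V E] x UV by auto
      moreover have "complete_on E (component V E x)" using x U_def by auto
      ultimately have "E x y" using ne unfolding complete_on_def by blast
      then show False using Si x y unfolding indep_set_def by blast
    qed
    ultimately have cU: "card (S \<inter> U) = k" unfolding k_def using card_image[of "component V E" "S \<inter> U"] by simp
    have "maximal_indep_set W E (S \<inter> W)"
      unfolding maximal_indep_set_def
    proof (intro conjI allI impI)
      show "indep_set W E (S \<inter> W)" using Si unfolding indep_set_def by auto
    next
      fix T assume T: "indep_set W E T \<and> S \<inter> W \<subseteq> T"
      have TW: "T \<subseteq> W" using T by (auto simp: indep_set_def)
      have "indep_set V E (T \<union> (S \<inter> U))"
        unfolding indep_set_def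
      proof (intro conjI ballI)
        show "T \<union> (S \<inter> U) \<subseteq> V" using TW W_def UV by auto
      next
        fix x y assume x: "x \<in> T \<union> (S \<inter> U)" and y: "y \<in> T \<union> (S \<inter> U)"
        show "\<not> E x y"
        proof
          assume e: "E x y"
          have "x \<in> T \<and> y \<in> T \<or> x \<in> S \<and> y \<in> S \<or> x \<in> T \<and> y \<in> U \<or> x \<in> U \<and> y \<in> T"
            using x y by auto
          moreover have "\<not> (x \<in> T \<and> y \<in> T)" using T e unfolding indep_set_def by blast
          moreover have "\<not> (x \<in> S \<and> y \<in> S)" using Si e unfolding indep_set_def by blast
          moreover have "\<not> (x \<in> T \<and> y \<in> U)" using noedge[of y x] sym[OF e] TW W_def by blast
          moreover have "\<not> (x \<in> U \<and> y \<in> T)" using noedge[of x y] e TW W_def by blast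
          ultimately show False by blast
        qed
      qed
      moreover have "S \<subseteq> T \<union> (S \<inter> U)" using T SV W_def by auto
      ultimately have "T \<union> (S \<inter> U) = S" using S unfolding maximal_indep_set_def by blast
      then show "T = S \<inter> W" using T TW W_def by auto
    qed
    then show "maximal_indep_set W E (S \<inter> W) \<and> card (S \<inter> U) = k" using cU by blast
  qed
  have Eq: "\<And>S. maximal_indep_set W E S \<Longrightarrow> maximal_indep_set V E (S \<union> R)"
  proof -
    fix S assume S: "maximal_indep_set W E S"
    have Si: "indep_set W E S" using S by (auto simp: maximal_indep_set_def)
    have SW: "S \<subseteq> W" using Si by (auto simp: indep_set_def)
    show "maximal_indep_set V E (S \<union> R)"
      unfolding maximal_indep_set_def
    proof (intro conjI allI impI)
      show "indep_set V E (S \<union> R)" using Cl[OF Si] by blast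
    next
      fix T assume T: "indep_set V E T \<and> S \<union> R \<subseteq> T"
      have TV: "T \<subseteq> V" using T by (auto simp: indep_set_def)
      have "indep_set W E (T \<inter> W)" using T W_def unfolding indep_set_def by auto
      moreover have "S \<subseteq> T \<inter> W" using T SW by auto
      ultimately have TW: "T \<inter> W = S" using S unfolding maximal_indep_set_def by blast
      have "card (T \<inter> U) \<le> card R" using A T cardR by auto
      moreover have "R \<subseteq> T \<inter> U" using T RU by auto
      moreover have "finite (T \<inter> U)" using finU by simp
      ultimately have TU: "T \<inter> U = R" using card_seteq by blast
      have "T = (T \<inter> W) \<union> (T \<inter> U)" using TV W_def by auto
      then show "T = S \<union> R" using TW TU by simp
    qed
  qed
  have finIV: "finite (card ` {S. indep_set V E S})" using fin_indep[OF finV] by simp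
  have finIW: "finite (card ` {S. indep_set W E S})" using fin_indep[OF finW] by simp
  have neIV: "card ` {S. indep_set V E S} \<noteq> {}" by (auto simp: indep_set_def)
  have neIW: "card ` {S. indep_set W E S} \<noteq> {}" by (auto simp: indep_set_def)
  have alpha: "indep_number V E = indep_number W E + k"
  proof (rule antisym)
    obtain S where S: "indep_set V E S" "card S = indep_number V E"
      using Max_in[OF finIV neIV] unfolding indep_number_def by auto
    have "indep_set W E (S \<inter> W)" using S W_def unfolding indep_set_def by auto
    then have "card (S \<inter> W) \<in> card ` {S. indep_set W E S}" by blast
    then have "card (S \<inter> W) \<le> indep_number W E" unfolding indep_number_def
      using Max_ge[OF finIW] by blast
    moreover have "card S = card (S \<inter> W) + card (S \<inter> U)" using split S by (auto simp: indep_set_def)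
    moreover have "card (S \<inter> U) \<le> k" using A S by auto
    ultimately show "indep_number V E \<le> indep_number W E + k" using S by linarith
  next
    obtain S where S: "indep_set W E S" "card S = indep_number W E"
      using Max_in[OF finIW neIW] unfolding indep_number_def by auto
    have "card (S \<union> R) \<in> card ` {S. indep_set V E S}" using Cl[OF S(1)] by blast
    then have "card (S \<union> R) \<le> indep_number V E" unfolding indep_number_def
      using Max_ge[OF finIV] by blast
    then show "indep_number W E + k \<le> indep_number V E" using Cl[OF S(1)] S by linarith
  qed
  have finMV: "finite (card ` {S. maximal_indep_set V E S})"
    using fin_indep[OF finV] by (auto simp: maximal_indep_set_def intro: finite_subset)
  have finMW: "finite (card ` {S. maximal_indep_set W E S})"
    using fin_indep[OF finW] by (auto simp: maximal_indep_set_def intro: finite_subset)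
  have neMV: "card ` {S. maximal_indep_set V E S} \<noteq> {}" using exists_maximal[OF finV] by auto
  have neMW: "card ` {S. maximal_indep_set W E S} \<noteq> {}" using exists_maximal[OF finW] by auto
  have ii: "indep_domination_number V E = indep_domination_number W E + k"
  proof (rule antisym)
    obtain S where S: "maximal_indep_set W E S" "card S = indep_domination_number W E"
      using Min_in[OF finMW neMW] unfolding indep_domination_number_def by auto
    have "card (S \<union> R) \<in> card ` {S. maximal_indep_set V E S}" using Eq[OF S(1)] by blast
    then have "card (S \<union> R) \<ge> indep_domination_number V E" unfolding indep_domination_number_def
      using Min_le[OF finMV] by blast
    moreover have "card (S \<union> R) = card S + k" using Cl S(1) by (auto simp: maximal_indep_set_def)
    ultimately show "indep_domination_number V E \<le> indep_domination_number W E + k" using S by linarith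
  next
    obtain S where S: "maximal_indep_set V E S" "card S = indep_domination_number V E"
      using Min_in[OF finMV neMV] unfolding indep_domination_number_def by auto
    have "card (S \<inter> W) \<in> card ` {S. maximal_indep_set W E S}" using D[OF S(1)] by blast
    then have "card (S \<inter> W) \<ge> indep_domination_number W E" unfolding indep_domination_number_def
      using Min_le[OF finMW] by blast
    moreover have "card S = card (S \<inter> W) + card (S \<inter> U)"
      using split S by (auto simp: maximal_indep_set_def indep_set_def)
    ultimately show "indep_domination_number W E + k \<le> indep_domination_number V E"
      using D[OF S(1)] S by linarith
  qed
  show ?thesis unfolding mu_alpha_def using alpha ii W_def by simp
qed

end
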